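(* Let $\mathcal{RR}_2$ be the set of partitions in which consecutive parts differ by at least $2$ and all parts are greater than $1$ (including the empty partition). For a nonempty partition $\pi=(\lambda_1,\dots,\lambda_\nu)$ let $\omega_{2,2}(\pi)=(\lambda_\nu-1)\prod_{i=1}^{\nu-1}(\lambda_i-\lambda_{i+1}-1)$, and let $\omega_{2,2}$ of the empty partition be $1$. Then, as formal power series, \[\sum_{\pi\in\mathcal{RR}_2}\omega_{2,2}(\pi)\,q^{|\pi|}=\sum_{\pi\in\tilde C_{\ge 0}}q^{|\pi|},\] where $\tilde C_{\ge0}$ is the set of all partitions with crank $\ge 0$.
   Context: A partition is a finite weakly decreasing sequence of positive integers; $|\pi|$ is the sum of its parts. The crank of a partition $\pi$ is defined as: the largest part of $\pi$ if $1$ is not a part of $\pi$ (the empty partition has crank $0$); otherwise, (the number of parts of $\pi$ larger than the number of $1$'s in $\pi$) minus (the number of $1$'s in $\pi$). *)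

theory Defs
  imports "HOL-Computational_Algebra.Formal_Power_Series"
begin

definition is_partition :: "nat list \<Rightarrow> bool" where
  "is_partition xs \<longleftrightarrow> sorted_wrt (\<ge>) xs \<and> (\<forall>x\<in>set xs. 0 < x)"

definition partitions_of :: "nat \<Rightarrow> nat list set" where
  "partitions_of n = {xs. is_partition xs \<and> sum_list xs = n}"

definition ones :: "nat list \<Rightarrow> nat" where
  "ones xs = count_list xs 1"

definition crank :: "nat list \<Rightarrow> int" where
  "crank xs = (if ones xs = 0 then (if xs = [] then 0 else int (hd xs))
               else int (length (filter (\<lambda>x. x > ones xs) xs)) - int (ones xs))"

definition RR2 :: "nat list \<Rightarrow> bool" where
  "RR2 xs \<longleftrightarrow> is_partition xs \<and> (\<forall>x\<in>set xs. 1 < x)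
      \<and> (\<forall>i. Suc i < length xs \<longrightarrow> xs ! i \<ge> xs ! Suc i + 2)"

text \<open>omega_{2,2}; integer-valued (all factors are positive on RR_2 anyway).\<close>
definition omega22 :: "nat list \<Rightarrow> int" where
  "omega22 xs = (if xs = [] then 1
     else (int (last xs) - 1) *
          (\<Prod>i<length xs - 1. int (xs ! i) - int (xs ! Suc i) - 1))"

end

theory Submission
  imports Defs "HOL-Library.Multiset"
begin


definition G :: "nat multiset \<Rightarrow> nat \<Rightarrow> nat" where
  "G M j = size (filter_mset (\<lambda>x. j < x) M)"
definition fpM :: "nat multiset \<Rightarrow> bool" where
  "fpM M \<longleftrightarrow> (\<exists>j\<ge>1. G M j < j \<and> j \<le> G M (j-1))"
definition CM :: "nat multiset \<Rightarrow> bool" where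
  "CM M \<longleftrightarrow> count M 1 \<noteq> 0 \<and> G M (count M 1) < count M 1"
definition J :: "nat multiset \<Rightarrow> nat" where "J M = (LEAST j. G M j < j)"
definition PM :: "nat \<Rightarrow> nat multiset set" where
  "PM n = {M. (\<forall>x\<in>#M. 0<x) \<and> sum_mset M = n}"
definition phi where "phi M = M - {#J M#} + replicate_mset (J M) 1"
definition psi where "psi M = M - replicate_mset (J M) 1 + {#J M#}"

lemma G_antimono: "i \<le> k \<Longrightarrow> G M k \<le> G M i"
  unfolding G_def by (intro size_mset_mono mset_subset_eqI) auto

lemma G_add[simp]: "G (M + N) i = G M i + G N i" by (simp add: G_def)
lemma G_add_mset[simp]: "G (add_mset a M) i = (if i < a then 1 else 0) + G M i" by (simp add: G_def)
lemma G_empty[simp]: "G {#} i = 0" by (simp add: G_def)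
lemma G_single[simp]: "G {#a#} i = (if i < a then 1 else 0)" by (simp add: G_def)
lemma G_rep1[simp]: "1 \<le> i \<Longrightarrow> G (replicate_mset k 1) i = 0"
  by (induct k) (auto simp: G_def)
lemma G_rep1'[simp]: "0 < i \<Longrightarrow> G (replicate_mset k (Suc 0)) i = 0"
  by (induct k) (auto simp: G_def)
lemma G_le_size: "G M i \<le> size M" unfolding G_def by (rule size_filter_mset_lesseq)

lemma G_split: "1 \<le> j \<Longrightarrow> G M (j-1) = G M j + count M j"
proof -
  assume "1 \<le> j"
  hence "filter_mset (\<lambda>x. j-1 < x) M = filter_mset (\<lambda>x. j < x) M + filter_mset (\<lambda>x. x = j) M"
    by (intro multiset_eqI) auto
  thus ?thesis by (simp add: G_def filter_eq_replicate_mset)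
qed

lemma G_diff: "N \<subseteq># M \<Longrightarrow> G (M - N) i = G M i - G N i"
  by (metis G_add add_diff_cancel_right' subset_mset.diff_add)

lemma J_ex: "G M (Suc (size M)) < Suc (size M)"
  using G_le_size[of M "Suc (size M)"] by simp

lemma J_prop: "G M (J M) < J M"
  unfolding J_def by (rule LeastI, rule J_ex)
lemma J_min: "i < J M \<Longrightarrow> \<not> G M i < i"
  unfolding J_def by (rule not_less_Least)
lemma J_pos: "1 \<le> J M" using J_prop[of M] by (cases "J M") auto

lemma J_eq: "1 \<le> j \<Longrightarrow> G M j < j \<Longrightarrow> (\<And>i. 1 \<le> i \<Longrightarrow> i < j \<Longrightarrow> i \<le> G M i) \<Longrightarrow> J M = j"
  unfolding J_def
  apply (rule Least_equality, simp)
  by (metis less_one not_le not_less0 le_less_trans linorder_not_less)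

lemma fpM_J: assumes "fpM M" shows "J M \<le> G M (J M - 1)" "J M \<in># M"
proof -
  obtain j where j: "1 \<le> j" "G M j < j" "j \<le> G M (j-1)" using assms fpM_def by auto
  have "J M = j"
  proof (rule J_eq[OF j(1,2)])
    fix i assume "1 \<le> i" "i < j"
    thus "i \<le> G M i" using G_antimono[of i "j-1" M] j by linarith
  qed
  thus "J M \<le> G M (J M - 1)" using j by simp
  have "count M j > 0" using G_split[of j M] j by linarith
  thus "J M \<in># M" using \<open>J M = j\<close> by simp
qed

lemma sum_rep1[simp]: "sum_mset (replicate_mset k (1::nat)) = k" by (induct k) auto

lemma phi_props: assumes "M \<in> PM n" "fpM M"
  shows "phi M \<in> PM n" "CM (phi M)" "J (phi M) = J M" "psi (phi M) = M"
proof -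
  define j where "j = J M"
  have j1: "1 \<le> j" using J_pos j_def by simp
  have jM: "j \<in># M" and jle: "j \<le> G M (j-1)" using fpM_J[OF assms(2)] j_def by auto
  have jlt: "G M j < j" using J_prop j_def by simp
  define M' where "M' = M - {#j#} + replicate_mset j 1"
  have pm: "phi M = M'" unfolding phi_def M'_def j_def ..
  have sub: "{#j#} \<subseteq># M" using jM by simp
  have GM': "G M' i = G M i - (if i < j then 1 else 0)" if "1 \<le> i" for i
    using that G_diff[OF sub, of i] by (simp add: M'_def)
  have c1: "count M' 1 \<ge> j" by (simp add: M'_def)
  have GM'j: "G M' j < j" using GM'[OF j1] jlt by simp
  have JM': "J M' = j"
  proof (rule J_eq[OF j1 GM'j])
    fix i assume "1 \<le> i" "i < j"
    moreover have "G M (j-1) \<le> G M i" using \<open>i < j\<close> by (intro G_antimono) simp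
    ultimately show "i \<le> G M' i" using GM'[of i] jle by simp
  qed
  show "CM (phi M)" unfolding pm CM_def
    using c1 j1 G_antimono[of j "count M' 1" M'] GM'j by auto
  show "J (phi M) = J M" using JM' pm j_def by simp
  have "psi (phi M) = M' - replicate_mset j 1 + {#j#}" unfolding pm psi_def JM' ..
  also have "\<dots> = M" unfolding M'_def using jM by simp
  finally show "psi (phi M) = M" .
  have "sum_mset M = j + sum_mset (M - {#j#})" using jM by (metis insert_DiffM sum_mset.add_mset)
  moreover have "\<forall>x\<in>#M'. 0 < x" unfolding M'_def using assms(1) unfolding PM_def
    by (auto dest: in_diffD)
  ultimately show "phi M \<in> PM n" using assms(1) unfolding pm PM_def
    by (simp add: M'_def)
qed

lemma psi_props: assumes "M \<in> PM n" "CM M"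
  shows "psi M \<in> PM n" "fpM (psi M)" "J (psi M) = J M" "phi (psi M) = M"
proof -
  define j where "j = J M"
  have j1: "1 \<le> j" using J_pos j_def by simp
  have jlt: "G M j < j" using J_prop j_def by simp
  have jmin: "i \<le> G M i" if "i < j" for i using J_min[of i M] that j_def by simp
  have jw: "j \<le> count M 1" unfolding j_def J_def using assms(2) CM_def by (intro Least_le) auto
  have w1: "count M 1 \<noteq> 0" using assms(2) CM_def by auto
  have sub: "replicate_mset j 1 \<subseteq># M" using jw by (intro mset_subset_eqI) auto
  define M' where "M' = M - replicate_mset j 1 + {#j#}"
  have pm: "psi M = M'" unfolding psi_def M'_def j_def ..
  have GM': "G M' i = G M i + (if i < j then 1 else 0)" if "1 \<le> i" for i
    using that G_diff[OF sub, of i] by (simp add: M'_def)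
  have GM'j: "G M' j < j" using GM'[OF j1] jlt by simp
  have "j \<le> G M' (j-1)"
  proof (cases "j = 1")
    case True
    have "G M' 0 \<ge> 1" unfolding M'_def using j1 by simp
    thus ?thesis using True by simp
  next
    case False
    thus ?thesis using GM'[of "j-1"] jmin[of "j-1"] j1 by simp
  qed
  hence fp: "fpM M'" unfolding fpM_def using j1 GM'j by (intro exI[of _ j]) simp
  have JM': "J M' = j"
  proof (rule J_eq[OF j1 GM'j])
    fix i assume "1 \<le> i" "i < j"
    thus "i \<le> G M' i" using GM'[of i] jmin[of i] by simp
  qed
  show "fpM (psi M)" using fp pm by simp
  show "J (psi M) = J M" using JM' pm j_def by simp
  have "phi (psi M) = M' - {#j#} + replicate_mset j 1" unfolding pm phi_def JM' ..
  also have "\<dots> = M" unfolding M'_def using sub by simp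
  finally show "phi (psi M) = M" .
  have "sum_mset M = sum_mset (M - replicate_mset j 1) + j"
    using sub by (metis sum_mset.union subset_mset.diff_add sum_rep1)
  moreover have "\<forall>x\<in>#M'. 0 < x" unfolding M'_def using assms(1) j1 unfolding PM_def
    by (auto dest: in_diffD)
  ultimately show "psi M \<in> PM n" using assms(1) unfolding pm PM_def
    by (simp add: M'_def)
qed



lemma card_fp_C: assumes fin: "finite (PM n)"
  shows "card {M\<in>PM n. fpM M} = card {M\<in>PM n. CM M}"
proof (rule antisym)
  have "inj_on phi {M\<in>PM n. fpM M}"
    by (rule inj_on_inverseI[where g=psi]) (auto intro: phi_props)
  moreover have "phi ` {M\<in>PM n. fpM M} \<subseteq> {M\<in>PM n. CM M}" using phi_props by auto
  ultimately show "card {M\<in>PM n. fpM M} \<le> card {M\<in>PM n. CM M}"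
    using fin by (intro card_inj_on_le) auto
next
  have "inj_on psi {M\<in>PM n. CM M}"
    by (rule inj_on_inverseI[where g=phi]) (auto intro: psi_props)
  moreover have "psi ` {M\<in>PM n. CM M} \<subseteq> {M\<in>PM n. fpM M}" using psi_props by auto
  ultimately show "card {M\<in>PM n. CM M} \<le> card {M\<in>PM n. fpM M}"
    using fin by (intro card_inj_on_le) auto
qed

lemma G_mset: "G (mset xs) j = length (filter (\<lambda>x. j < x) xs)"
  by (simp add: G_def flip: mset_filter size_mset)

lemma length_le_sum: "\<forall>x\<in>set xs. 0 < (x::nat) \<Longrightarrow> length xs \<le> sum_list xs"
  by (induct xs) auto

lemma fin_part: "finite (partitions_of n)"
proof (rule finite_subset)
  show "partitions_of n \<subseteq> {xs. set xs \<subseteq> {0..n} \<and> length xs \<le> n}"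
    unfolding partitions_of_def is_partition_def
    using length_le_sum member_le_sum_list by fastforce
  show "finite {xs. set xs \<subseteq> {0..n} \<and> length xs \<le> n}"
    by (rule finite_lists_length_le) simp
qed

lemma part_sort: "is_partition xs \<Longrightarrow> sort ys = rev xs \<longleftrightarrow> mset ys = mset xs"
proof -
  assume "is_partition xs"
  hence s: "sorted (rev xs)" unfolding is_partition_def by (simp add: sorted_wrt_rev)
  show ?thesis
  proof
    assume "sort ys = rev xs"
    hence "mset (sort ys) = mset (rev xs)" by simp
    thus "mset ys = mset xs" by simp
  next
    assume "mset ys = mset xs" thus "sort ys = rev xs" using s
      by (intro properties_for_sort) simp
  qed
qed

lemma mset_inj: "inj_on mset (partitions_of n)"
proof (rule inj_onI)
  fix xs ys assume a: "xs \<in> partitions_of n" "ys \<in> partitions_of n" "mset xs = mset ys"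
  hence "sort xs = rev ys" "sort xs = rev xs" using part_sort[of ys xs] part_sort[of xs xs]
    unfolding partitions_of_def by auto
  thus "xs = ys" by simp
qed

lemma mset_img: "mset ` partitions_of n = PM n"
proof
  show "mset ` partitions_of n \<subseteq> PM n"
    unfolding partitions_of_def PM_def is_partition_def by (auto simp: sum_mset_sum_list)
next
  show "PM n \<subseteq> mset ` partitions_of n"
  proof
    fix M assume M: "M \<in> PM n"
    define xs where "xs = rev (sorted_list_of_multiset M)"
    have "mset xs = M" by (simp add: xs_def)
    moreover have "xs \<in> partitions_of n"
    proof -
      have "sorted_wrt (\<ge>) xs" unfolding xs_def sorted_wrt_rev
        using sorted_sorted_list_of_multiset[of M] by (simp add:)
      moreover have "\<forall>x\<in>set xs. 0 < x" using M unfolding PM_def xs_def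
        by simp
      moreover have "sum_list xs = n"
      proof -
        have "sum_list xs = sum_mset (mset xs)" by (simp add: sum_mset_sum_list)
        thus ?thesis using M \<open>mset xs = M\<close> unfolding PM_def by simp
      qed
      ultimately show ?thesis unfolding partitions_of_def is_partition_def by auto
    qed
    ultimately show "M \<in> mset ` partitions_of n" by blast
  qed
qed

lemma fin_PM: "finite (PM n)"
proof -
  have "finite (mset ` partitions_of n)" by (rule finite_imageI[OF fin_part])
  thus ?thesis by (simp add: mset_img)
qed

lemma card_transfer: "card {xs\<in>partitions_of n. Q (mset xs)} = card {M\<in>PM n. Q M}"
proof -
  have "{M\<in>PM n. Q M} = mset ` {xs\<in>partitions_of n. Q (mset xs)}"
    using mset_img[of n] by (auto simp: image_iff)
  moreover have "inj_on mset {xs\<in>partitions_of n. Q (mset xs)}"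
    by (rule inj_on_subset[OF mset_inj]) auto
  ultimately show ?thesis by (simp add: card_image)
qed

lemma crank_C: "0 \<le> crank xs \<longleftrightarrow> \<not> CM (mset xs)"
  unfolding crank_def CM_def ones_def by (auto simp: G_mset count_mset)

lemma rhs_eq: "card {xs\<in>partitions_of n. 0 \<le> crank xs} = card {xs\<in>partitions_of n. \<not> fpM (mset xs)}"
proof -
  have "card {xs\<in>partitions_of n. 0 \<le> crank xs} = card {M\<in>PM n. \<not> CM M}"
    using card_transfer[of n "\<lambda>M. \<not> CM M"] crank_C by simp
  also have "\<dots> = card (PM n) - card {M\<in>PM n. CM M}"
    using fin_PM by (subst card_Diff_subset[symmetric]) (auto intro: arg_cong[where f=card])
  also have "\<dots> = card (PM n) - card {M\<in>PM n. fpM M}" using card_fp_C fin_PM by simp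
  also have "\<dots> = card {M\<in>PM n. \<not> fpM M}"
    using fin_PM by (subst card_Diff_subset[symmetric]) (auto intro: arg_cong[where f=card])
  also have "\<dots> = card {xs\<in>partitions_of n. \<not> fpM (mset xs)}"
    using card_transfer[of n "\<lambda>M. \<not> fpM M"] by simp
  finally show ?thesis .
qed



definition peel :: "nat list \<Rightarrow> nat list" where
  "peel xs = map (\<lambda>x. x - 1) (filter (\<lambda>x. 2 \<le> x) (tl xs))"
definition hook :: "nat list \<Rightarrow> nat" where
  "hook xs = hd xs + length xs - 1"

lemma length_peel: "length (peel xs) \<le> length (tl xs)"
  unfolding peel_def using length_filter_le[of _ "tl xs"] by simp

function H :: "nat list \<Rightarrow> nat list" where
  "H xs = (if xs = [] then [] else hook xs # H (peel xs))"
  by auto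
termination
  apply (relation "measure length", simp)
  using length_peel by (metis in_measure le_less_trans length_tl diff_less length_greater_0_conv zero_less_one)

declare H.simps[simp del]

lemma H_Nil[simp]: "H [] = []" by (simp add: H.simps)
lemma H_Cons: "H (a#r) = hook (a#r) # H (peel (a#r))" by (subst H.simps) simp
lemma H_eq_Nil[simp]: "H xs = [] \<longleftrightarrow> xs = []" by (subst H.simps) simp

lemma G_Cons: "G (mset (a#r)) i = (if i < a then 1 else 0) + G (mset r) i"
  by (simp add: G_mset)

lemma G_peel: "G (mset (peel (a#r))) i = G (mset r) (Suc i)"
proof -
  have "filter (\<lambda>x. i < x) (map (\<lambda>x. x - 1) (filter (\<lambda>x. 2 \<le> x) r))
      = map (\<lambda>x. x - 1) (filter (\<lambda>x. Suc i < x) r)"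
    by (induct r) auto
  thus ?thesis unfolding G_mset peel_def list.sel by simp
qed

lemma part_Cons: "is_partition (a#r) \<longleftrightarrow> 0 < a \<and> (\<forall>x\<in>set r. x \<le> a) \<and> is_partition r"
  unfolding is_partition_def by auto

lemma G_zero: "\<forall>x\<in>set r. x \<le> a \<Longrightarrow> a \<le> k \<Longrightarrow> G (mset r) k = 0"
  by (auto simp: G_mset filter_empty_conv)

lemma fp_Nil[simp]: "\<not> fpM (mset [])" by (simp add: fpM_def G_def)

lemma A1: assumes "is_partition (a#r)"
  shows "fpM (mset (a#r)) \<longleftrightarrow> a = 1 \<or> fpM (mset (peel (a#r)))"
proof -
  have a0: "0 < a" and le: "\<forall>x\<in>set r. x \<le> a" using assms part_Cons by auto
  note z = G_zero[OF le]
  show ?thesis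
  proof
    assume "fpM (mset (a#r))"
    then obtain j where j: "1 \<le> j" "G (mset (a#r)) j < j" "j \<le> G (mset (a#r)) (j-1)"
      unfolding fpM_def by auto
    show "a = 1 \<or> fpM (mset (peel (a#r)))"
    proof (cases "j = 1")
      case True thus ?thesis using j(2) a0 by (auto simp: G_Cons split: if_splits)
    next
      case False
      then obtain i where i: "j = Suc i" "1 \<le> i" using j(1) by (cases j) auto
      have "G (mset r) (Suc i) < i \<and> i \<le> G (mset r) i"
      proof (cases "Suc i < a")
        case True thus ?thesis using j i by (simp add: G_Cons)
      next
        case False
        hence zz: "G (mset r) (Suc i) = 0" using z by simp
        show ?thesis
        proof (cases "a = Suc i")
          case True thus ?thesis using j i zz by (simp add: G_Cons)
        next
          case False
          hence "a \<le> i" using \<open>\<not> Suc i < a\<close> by simp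
          hence "G (mset r) i = 0" using z by simp
          thus ?thesis using j i \<open>a \<le> i\<close> by (simp add: G_Cons)
        qed
      qed
      thus ?thesis unfolding fpM_def G_peel using i by (intro disjI2 exI[of _ i]) simp
    qed
  next
    assume "a = 1 \<or> fpM (mset (peel (a#r)))"
    thus "fpM (mset (a#r))"
    proof
      assume "a = 1"
      hence "G (mset (a#r)) 1 = 0" using z by (simp add: G_Cons)
      moreover have "1 \<le> G (mset (a#r)) 0" using \<open>a = 1\<close> by (simp add: G_Cons)
      ultimately show ?thesis unfolding fpM_def by (intro exI[of _ 1]) simp
    next
      assume "fpM (mset (peel (a#r)))"
      then obtain i where i: "1 \<le> i" "G (mset r) (Suc i) < i" "i \<le> G (mset r) i"
        unfolding fpM_def G_peel by auto
      have "i < a"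
      proof (rule ccontr)
        assume "\<not> i < a" hence "G (mset r) i = 0" using z by simp
        thus False using i by simp
      qed
      hence "G (mset (a#r)) (Suc i) < Suc i \<and> Suc i \<le> G (mset (a#r)) i"
        using i by (simp add: G_Cons)
      thus ?thesis unfolding fpM_def by (intro exI[of _ "Suc i"]) simp
    qed
  qed
qed


lemma peel_part: "is_partition xs \<Longrightarrow> is_partition (peel xs)"
proof -
  assume p: "is_partition xs"
  hence "is_partition (tl xs)" unfolding is_partition_def by (cases xs) auto
  hence "sorted_wrt (\<ge>) (filter (\<lambda>x. 2 \<le> x) (tl xs))"
    unfolding is_partition_def by (simp add: sorted_wrt_filter)
  hence "sorted_wrt (\<ge>) (peel xs)" unfolding peel_def sorted_wrt_map
    by (rule sorted_wrt_mono_rel[rotated]) auto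
  moreover have "\<forall>x\<in>set (peel xs). 0 < x" unfolding peel_def by auto
  ultimately show ?thesis unfolding is_partition_def by simp
qed

lemma sum_aux: "\<forall>x\<in>set r. 0 < (x::nat) \<Longrightarrow>
   sum_list r = length r + sum_list (map (\<lambda>x. x - 1) (filter (\<lambda>x. 2 \<le> x) r))"
  by (induct r) auto

lemma sum_peel: "is_partition (a#r) \<Longrightarrow> sum_list (a#r) = hook (a#r) + sum_list (peel (a#r))"
  using sum_aux[of r] unfolding hook_def peel_def is_partition_def by simp

lemma H_sum: "is_partition xs \<Longrightarrow> sum_list (H xs) = sum_list xs"
proof (induction xs rule: H.induct)
  case (1 xs)
  show ?case
  proof (cases xs)
    case Nil thus ?thesis by simp
  next
    case (Cons a r)
    have "sum_list (H (peel xs)) = sum_list (peel xs)"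
      using 1 peel_part Cons by simp
    thus ?thesis using sum_peel[of a r] 1(2) Cons by (simp add: H_Cons)
  qed
qed

lemma all_Suc_less: "(\<forall>i. Suc i < Suc (length t) \<longrightarrow> P i) \<longleftrightarrow>
   (t \<noteq> [] \<longrightarrow> P 0) \<and> (\<forall>k. Suc k < length t \<longrightarrow> P (Suc k))"
  apply auto
  subgoal for i by (cases i) auto
  done

lemma sorted_hd: "sorted_wrt (\<ge>) t \<Longrightarrow> x \<in> set t \<Longrightarrow> x \<le> hd (t::nat list)"
  by (cases t) auto

lemma RR2_Cons: "RR2 (h # t) \<longleftrightarrow> 1 < h \<and> RR2 t \<and> (t \<noteq> [] \<longrightarrow> hd t + 2 \<le> h)"
proof -
  have gaps: "(\<forall>i. Suc i < length (h#t) \<longrightarrow> (h#t) ! i \<ge> (h#t) ! Suc i + 2) \<longleftrightarrow>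
     (t \<noteq> [] \<longrightarrow> hd t + 2 \<le> h) \<and> (\<forall>k. Suc k < length t \<longrightarrow> t ! k \<ge> t ! Suc k + 2)"
    using all_Suc_less[of t "\<lambda>i. (h#t) ! i \<ge> (h#t) ! Suc i + 2"] by (simp add: hd_conv_nth)
  show ?thesis
  proof
    assume "RR2 (h#t)" thus "1 < h \<and> RR2 t \<and> (t \<noteq> [] \<longrightarrow> hd t + 2 \<le> h)"
      unfolding RR2_def gaps is_partition_def by auto
  next
    assume a: "1 < h \<and> RR2 t \<and> (t \<noteq> [] \<longrightarrow> hd t + 2 \<le> h)"
    hence "\<forall>x\<in>set t. x \<le> h" unfolding RR2_def is_partition_def
      using sorted_hd by fastforce
    thus "RR2 (h#t)" using a unfolding RR2_def gaps is_partition_def by auto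
  qed
qed

lemma hd_peel_le: assumes "is_partition (a#r)" "peel (a#r) \<noteq> []"
  shows "hd (peel (a#r)) + 1 \<le> a"
proof -
  let ?f = "filter (\<lambda>x. 2 \<le> x) r"
  have ne: "?f \<noteq> []" using assms(2) unfolding peel_def by simp
  hence "hd ?f \<in> set r" "2 \<le> hd ?f" using hd_in_set[OF ne] by auto
  moreover have "\<forall>x\<in>set r. x \<le> a" using assms(1) part_Cons by auto
  ultimately show ?thesis using ne unfolding peel_def by (simp add: hd_map)
qed

lemma H_RR2: "is_partition xs \<Longrightarrow> \<not> fpM (mset xs) \<Longrightarrow> RR2 (H xs)"
proof (induction xs rule: H.induct)
  case (1 xs)
  show ?case
  proof (cases xs)
    case Nil thus ?thesis by (simp add: RR2_def is_partition_def)
  next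
    case (Cons a r)
    have p: "is_partition (a#r)" using 1(2) Cons by simp
    have nf: "a \<noteq> 1" "\<not> fpM (mset (peel (a#r)))" using A1[OF p] 1(3) Cons by auto
    have a2: "2 \<le> a" using nf(1) p part_Cons by fastforce
    have IH: "RR2 (H (peel xs))" using 1(1) Cons peel_part p nf by simp
    have "H (peel (a#r)) \<noteq> [] \<longrightarrow> hd (H (peel (a#r))) + 2 \<le> hook (a#r)"
    proof
      assume ne: "H (peel (a#r)) \<noteq> []"
      hence pne: "peel (a#r) \<noteq> []" by simp
      have "hd (H (peel (a#r))) = hook (peel (a#r))" using pne
        by (cases "peel (a#r)") (auto simp: H_Cons)
      moreover have "length (peel (a#r)) \<le> length r" using length_peel[of "a#r"] by simp
      moreover have "length (peel (a#r)) \<ge> 1" using pne by (cases "peel (a#r)") auto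
      ultimately show "hd (H (peel (a#r))) + 2 \<le> hook (a#r)"
        using hd_peel_le[OF p pne] unfolding hook_def by simp
    qed
    moreover have "1 < hook (a#r)" using a2 unfolding hook_def by simp
    ultimately show ?thesis using IH Cons by (simp add: H_Cons RR2_Cons)
  qed
qed


lemma omega22_single: "omega22 [h] = int h - 1" by (simp add: omega22_def)

lemma omega22_Cons: assumes "t \<noteq> []"
  shows "omega22 (h # t) = (int h - int (hd t) - 1) * omega22 t"
proof -
  obtain n where n: "length t = Suc n" using assms by (cases t) auto
  have "(\<Prod>i<length (h#t) - 1. int ((h#t) ! i) - int ((h#t) ! Suc i) - 1)
      = (int h - int (hd t) - 1) * (\<Prod>i<length t - 1. int (t ! i) - int (t ! Suc i) - 1)"
    using n by (simp del: prod.lessThan_Suc add: prod.lessThan_Suc_shift hd_conv_nth assms)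
  thus ?thesis using assms unfolding omega22_def by simp
qed

definition fib :: "nat list \<Rightarrow> nat list set" where
  "fib p = {xs. is_partition xs \<and> \<not> fpM (mset xs) \<and> H xs = p}"

definition build :: "nat \<Rightarrow> nat list \<Rightarrow> nat \<Rightarrow> nat list" where
  "build h mu a = a # map Suc mu @ replicate (h - a - length mu) 1"

definition lo :: "nat list \<Rightarrow> nat" where
  "lo mu = (if mu = [] then 2 else hd mu + 1)"

lemma peel_build: "is_partition mu \<Longrightarrow> peel (build h mu a) = mu"
proof -
  assume "is_partition mu"
  hence "filter (\<lambda>x. 2 \<le> x) (map Suc mu) = map Suc mu" unfolding is_partition_def
    by (auto simp: filter_id_conv)
  moreover have "filter (\<lambda>x. 2 \<le> x) (replicate k (1::nat)) = []" for k by (induct k) auto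
  ultimately show ?thesis unfolding peel_def build_def by (simp add: comp_def)
qed

lemma split_r: "sorted_wrt (\<ge>) r \<Longrightarrow> \<forall>x\<in>set r. 0 < (x::nat) \<Longrightarrow>
   r = filter (\<lambda>x. 2 \<le> x) r @ replicate (length r - length (filter (\<lambda>x. 2 \<le> x) r)) 1"
proof (induction r)
  case Nil thus ?case by simp
next
  case (Cons x r)
  show ?case
  proof (cases "2 \<le> x")
    case True
    have "length (filter (\<lambda>x. 2 \<le> x) r) \<le> length r" by (rule length_filter_le)
    thus ?thesis using Cons True by (simp add: Suc_diff_le)
  next
    case False
    hence x1: "x = 1" using Cons by auto
    hence all1: "\<forall>y\<in>set r. y = 1" using Cons by fastforce
    hence "filter (\<lambda>x. 2 \<le> x) r = []" by (auto simp: filter_empty_conv)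
    moreover have "r = replicate (length r) 1" using all1 by (simp add: replicate_length_same)
    ultimately show ?thesis using x1 by simp
  qed
qed

lemma map_Suc_aux: "map Suc (map (\<lambda>x. x - 1) (filter (\<lambda>x. 2 \<le> x) r)) = filter (\<lambda>x. 2 \<le> x) r"
  by (induct r) auto
lemma map_Suc_peel: "is_partition (a#r) \<Longrightarrow> map Suc (peel (a#r)) = filter (\<lambda>x. 2 \<le> x) r"
  unfolding peel_def using map_Suc_aux by simp

lemma sorted_rep[simp]: "sorted_wrt (\<lambda>x y. y \<le> x) (replicate t (x::nat))" by (induct t) auto
lemma fp_empty[simp]: "\<not> fpM {#}" using fp_Nil by simp
lemma fib_Nil: "fib [] = {[]}"
  unfolding fib_def by (auto simp: is_partition_def)

lemma fib_card: "RR2 p \<Longrightarrow> finite (fib p) \<and> int (card (fib p)) = omega22 p"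
proof (induction p)
  case Nil thus ?case by (simp add: fib_Nil omega22_def)
next
  case (Cons h p)
  have rr: "1 < h" "RR2 p" "p \<noteq> [] \<longrightarrow> hd p + 2 \<le> h" using Cons(2) RR2_Cons by auto
  have IH: "finite (fib p)" "int (card (fib p)) = omega22 p" using Cons(1) rr by auto
  define S where "S = (SIGMA mu:fib p. {lo mu..h - length mu})"
  define c where "c = (if p = [] then h - 1 else h - hd p - 1)"
  have mu_props: "mu \<in> fib p \<Longrightarrow> (p = [] \<longrightarrow> mu = []) \<and> (p \<noteq> [] \<longrightarrow> mu \<noteq> [] \<and> hook mu = hd p)" for mu
    unfolding fib_def by (cases mu) (auto simp: H_Cons)
  have cardB: "card {lo mu..h - length mu} = c" if "mu \<in> fib p" for mu
    using mu_props[OF that] rr unfolding c_def lo_def hook_def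
    by (cases mu) auto
  have finS: "finite S" unfolding S_def using IH(1) by auto
  have cardS: "card S = card (fib p) * c"
    unfolding S_def using IH(1) cardB by (simp add: card_SigmaI)
  have inj: "inj_on (\<lambda>(mu, a). build h mu a) S"
  proof (rule inj_onI, clarify)
    fix mu a mu' a' assume "(mu, a) \<in> S" "(mu', a') \<in> S" and eq: "build h mu a = build h mu' a'"
    hence "is_partition mu" "is_partition mu'" unfolding S_def fib_def by auto
    hence "mu = mu'" using eq peel_build by metis
    moreover have "a = a'" using eq unfolding build_def by simp
    ultimately show "mu = mu' \<and> a = a'" by simp
  qed
  have img: "fib (h # p) = (\<lambda>(mu, a). build h mu a) ` S"
  proof
    show "(\<lambda>(mu, a). build h mu a) ` S \<subseteq> fib (h # p)"
    proof clarify
      fix mu a assume "(mu, a) \<in> S"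
      hence mu: "mu \<in> fib p" and alo: "lo mu \<le> a" and ahi: "a \<le> h - length mu" unfolding S_def by auto
      have pm: "is_partition mu" "\<not> fpM (mset mu)" "H mu = p" using mu unfolding fib_def by auto
      have a2: "2 \<le> a" using alo pm(1) unfolding lo_def is_partition_def
        by (cases mu) (auto split: if_splits)
      define t where "t = h - a - length mu"
      have bd: "build h mu a = a # (map Suc mu @ replicate t 1)" unfolding build_def t_def ..
      have le1: "Suc x \<le> a" if "x \<in> set mu" for x
      proof -
        have "mu \<noteq> []" using that by auto
        hence "lo mu = hd mu + 1" unfolding lo_def by simp
        moreover have "x \<le> hd mu" using sorted_hd[OF _ that] pm(1) unfolding is_partition_def by simp
        ultimately show ?thesis using alo by simp
      qed
      have le: "\<forall>x\<in>set (map Suc mu @ replicate t 1). x \<le> a"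
        using le1 a2 by auto
      have "is_partition (map Suc mu @ replicate t 1)"
        using pm(1) unfolding is_partition_def
        by (auto simp: sorted_wrt_append sorted_wrt_map intro: sorted_wrt_mono_rel[rotated])
      hence part: "is_partition (build h mu a)" unfolding bd part_Cons using le a2 by simp
      have nfp: "\<not> fpM (mset (build h mu a))"
        using A1[OF part[unfolded bd]] peel_build[OF pm(1), of h a] pm(2) a2 unfolding bd by auto
      have "hook (build h mu a) = h" unfolding bd hook_def t_def using ahi a2 by simp
      hence "H (build h mu a) = h # p" using peel_build[OF pm(1), of h a] pm(3) unfolding bd
        by (simp add: H_Cons)
      thus "build h mu a \<in> fib (h # p)" using part nfp unfolding fib_def by simp
    qed
  next
    show "fib (h # p) \<subseteq> (\<lambda>(mu, a). build h mu a) ` S"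
    proof
      fix xs assume xs: "xs \<in> fib (h # p)"
      hence "xs \<noteq> []" unfolding fib_def by auto
      then obtain a r where xar: "xs = a # r" by (cases xs) auto
      have part: "is_partition (a#r)" and nf: "\<not> fpM (mset (a#r))" and Hx: "H (a#r) = h # p"
        using xs xar unfolding fib_def by auto
      have hk: "hook (a#r) = h" and Hp: "H (peel (a#r)) = p" using Hx by (auto simp: H_Cons)
      have nf2: "a \<noteq> 1" "\<not> fpM (mset (peel (a#r)))" using A1[OF part] nf by auto
      define mu where "mu = peel (a#r)"
      have mu: "mu \<in> fib p" unfolding fib_def mu_def using peel_part[OF part] nf2 Hp by simp
      have a0: "0 < a" using part part_Cons by auto
      have alo: "lo mu \<le> a"
      proof (cases "mu = []")
        case True thus ?thesis using nf2 a0 unfolding lo_def by simp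
      next
        case False thus ?thesis using hd_peel_le[OF part] unfolding lo_def mu_def by simp
      qed
      have lmu: "length mu \<le> length r" using length_peel[of "a#r"] unfolding mu_def by simp
      have ahi: "a \<le> h - length mu" using hk lmu unfolding hook_def by simp
      have rr: "r = map Suc mu @ replicate (length r - length mu) 1"
      proof -
        have "sorted_wrt (\<ge>) r" "\<forall>x\<in>set r. 0 < x" using part unfolding is_partition_def by auto
        from split_r[OF this] show ?thesis
          unfolding mu_def map_Suc_peel[OF part] using length_map[of Suc "peel (a#r)"]
          by (metis map_Suc_peel[OF part])
      qed
      have e: "h - a - length mu = length r - length mu" using hk unfolding hook_def by simp
      have "xs = build h mu a" unfolding xar build_def e using rr by simp
      moreover have "(mu, a) \<in> S" unfolding S_def using mu alo ahi by simp
      ultimately show "xs \<in> (\<lambda>(mu, a). build h mu a) ` S" by force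
    qed
  qed
  have fin: "finite (fib (h # p))" unfolding img using finS by simp
  have "card (fib (h # p)) = card (fib p) * c" unfolding img using card_image[OF inj] cardS by simp
  moreover have "omega22 (h # p) = int c * omega22 p"
  proof (cases "p = []")
    case True thus ?thesis using rr unfolding c_def by (simp add: omega22_single omega22_def)
  next
    case False thus ?thesis using rr unfolding c_def by (simp add: omega22_Cons of_nat_diff)
  qed
  ultimately show ?case using fin IH(2) by simp
qed


lemma lhs_eq: "(\<Sum>xs\<in>{xs\<in>partitions_of n. RR2 xs}. omega22 xs)
    = int (card {xs\<in>partitions_of n. \<not> fpM (mset xs)})"
proof -
  define N where "N = {xs\<in>partitions_of n. \<not> fpM (mset xs)}"
  define T where "T = {xs\<in>partitions_of n. RR2 xs}"
  have fN: "finite N" unfolding N_def using fin_part by simp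
  have fT: "finite T" unfolding T_def using fin_part by simp
  have sub: "H ` N \<subseteq> T"
  proof
    fix p assume "p \<in> H ` N"
    then obtain xs where xs: "xs \<in> N" "p = H xs" by auto
    have "RR2 p" using xs H_RR2 unfolding N_def partitions_of_def by auto
    moreover have "sum_list p = n" using xs H_sum unfolding N_def partitions_of_def by auto
    ultimately show "p \<in> T" unfolding T_def partitions_of_def RR2_def by auto
  qed
  have fibeq: "{xs. xs \<in> N \<and> H xs = p} = fib p" if "p \<in> T" for p
  proof -
    have "sum_list xs = n" if "is_partition xs" "H xs = p" for xs
      using H_sum[OF that(1)] that(2) \<open>p \<in> T\<close> unfolding T_def partitions_of_def by auto
    thus ?thesis unfolding N_def fib_def partitions_of_def by auto
  qed
  have "int (card N) = (\<Sum>xs\<in>N. (1::int))" by simp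
  also have "\<dots> = (\<Sum>p\<in>T. \<Sum>xs\<in>{xs. xs \<in> N \<and> H xs = p}. (1::int))"
    by (rule sum.group[OF fN fT sub, symmetric])
  also have "\<dots> = (\<Sum>p\<in>T. omega22 p)"
  proof (rule sum.cong[OF refl])
    fix p assume p: "p \<in> T"
    hence "RR2 p" unfolding T_def by simp
    thus "(\<Sum>xs\<in>{xs. xs \<in> N \<and> H xs = p}. (1::int)) = omega22 p"
      using fib_card fibeq[OF p] by simp
  qed
  finally show ?thesis unfolding T_def N_def by simp
qed

theorem theorem7:
  shows "(Abs_fps (\<lambda>n. \<Sum>xs\<in>{xs\<in>partitions_of n. RR2 xs}. omega22 xs) :: int fps)
       = Abs_fps (\<lambda>n. int (card {xs\<in>partitions_of n. crank xs \<ge> 0}))"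
  using lhs_eq rhs_eq by simp

end
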